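(* Let $\mathcal{O}(\mathbb{D})$ be the vector space of all analytic functions on the open unit disk $\mathbb{D}$. For $f\in\mathcal{O}(\mathbb{D})$ define $$(Cf)(z)=\frac{1}{z}\int_0^z\frac{f(\xi)}{1-\xi}\,d\xi,\quad z\in\mathbb{D},$$ where the integral is along any path from $0$ to $z$ in $\mathbb{D}$ (with the value at $z=0$ understood by continuity, so that $Cf\in\mathcal{O}(\mathbb{D})$). Then the map $f\mapsto Cf$ is a linear isomorphism of $\mathcal{O}(\mathbb{D})$ onto itself. *)

theory Defs
  imports "HOL-Complex_Analysis.Complex_Analysis"
begin

text \<open>Analytic functions on the open unit disk, represented extensionally:
  holomorphic on ball 0 1 and equal to 0 outside the disk (so each function
  on the disk has exactly one representative).\<close>
definition OD :: "(complex \<Rightarrow> complex) set" where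
  "OD = {f. f holomorphic_on ball 0 1 \<and> (\<forall>z. z \<notin> ball 0 1 \<longrightarrow> f z = 0)}"

definition Craw :: "(complex \<Rightarrow> complex) \<Rightarrow> complex \<Rightarrow> complex" where
  "Craw f z = (1 / z) * contour_integral (linepath 0 z) (\<lambda>\<xi>. f \<xi> / (1 - \<xi>))"

definition Cop :: "(complex \<Rightarrow> complex) \<Rightarrow> complex \<Rightarrow> complex" where
  "Cop f z = (if z \<in> ball 0 1 then
                (if z = 0 then Lim (at 0) (Craw f) else Craw f z)
              else 0)"

end

theory Submission
  imports Defs
begin

lemma Cop_formula:
  assumes G: "\<And>x. x \<in> ball 0 1 \<Longrightarrow> (G has_field_derivative f x / (1 - x)) (at x)"
  shows "Cop f = (\<lambda>z. if z \<in> ball 0 1 then (if z = 0 then f 0 else (G z - G 0) / z) else 0)"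
proof -
  have ci: "contour_integral (linepath 0 z) (\<lambda>\<xi>. f \<xi> / (1 - \<xi>)) = G z - G 0"
    if z: "z \<in> ball 0 1" for z
  proof -
    have "((\<lambda>\<xi>. f \<xi> / (1 - \<xi>)) has_contour_integral (G (pathfinish (linepath 0 z)) - G (pathstart (linepath 0 z)))) (linepath 0 z)"
    proof (rule contour_integral_primitive[where S="ball 0 1"])
      show "\<And>x. x \<in> ball 0 1 \<Longrightarrow> (G has_field_derivative f x / (1 - x)) (at x within ball 0 1)"
        using G has_field_derivative_at_within by blast
      show "valid_path (linepath 0 z)" by simp
      show "path_image (linepath 0 z) \<subseteq> ball 0 1"
        using z by (simp add: closed_segment_subset)
    qed
    then show ?thesis using contour_integral_unique by simp
  qed
  have craw: "Craw f z = (G z - G 0) / z" if "z \<in> ball 0 1" for z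
    using ci[OF that] by (simp add: Craw_def)
  have d0: "(G has_field_derivative f 0 / (1 - 0)) (at 0)" using G[of 0] by simp
  hence "((\<lambda>y. (G y - G 0) / (y - 0)) \<longlongrightarrow> f 0) (at 0)"
    using has_field_derivative_iff by fastforce
  hence t: "((\<lambda>y. (G y - G 0) / y) \<longlongrightarrow> f 0) (at 0)" by simp
  have ev: "\<forall>\<^sub>F y in at 0. (G y - G 0) / y = Craw f y"
  proof -
    have "\<forall>\<^sub>F y in at (0::complex). y \<in> ball 0 1"
      by (rule eventually_at_in_open') auto
    then show ?thesis by eventually_elim (simp add: craw)
  qed
  have "(Craw f \<longlongrightarrow> f 0) (at 0)" using tendsto_cong[OF ev] t by blast
  hence "Lim (at 0) (Craw f) = f 0" by (simp add: tendsto_Lim)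
  then show ?thesis unfolding Cop_def using craw by (auto simp: fun_eq_iff)
qed

lemma Cop_formula_pt:
  assumes G: "\<And>x. x \<in> ball 0 1 \<Longrightarrow> (G has_field_derivative f x / (1 - x)) (at x)"
  shows "Cop f z = (if z \<in> ball 0 1 then (if z = 0 then f 0 else (G z - G 0) / z) else 0)"
  using Cop_formula[OF G] by metis

lemma exists_prim:
  assumes "f \<in> OD"
  obtains G where "\<And>x. x \<in> ball 0 1 \<Longrightarrow> (G has_field_derivative f x / (1 - x)) (at x)"
proof -
  have hol: "f holomorphic_on ball 0 1" using assms by (simp add: OD_def)
  have "(\<lambda>x. f x / (1 - x)) holomorphic_on ball 0 1"
    using hol by (intro holomorphic_intros) (auto simp: dist_norm)
  then obtain G where "\<And>x. x \<in> ball 0 1 \<Longrightarrow> (G has_field_derivative f x / (1 - x)) (at x within ball 0 1)"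
    using holomorphic_convex_primitive'[of "ball 0 1"] by auto
  then show ?thesis using that at_within_open[OF _ open_ball] by metis
qed

lemma Cop_OD:
  assumes f: "f \<in> OD" and G: "\<And>x. x \<in> ball 0 1 \<Longrightarrow> (G has_field_derivative f x / (1 - x)) (at x)"
  shows "Cop f \<in> OD"
proof -
  have "G holomorphic_on ball 0 1"
    using G holomorphic_on_def field_differentiable_def field_differentiable_at_within by blast
  hence h: "(\<lambda>z. if z = 0 then deriv G 0 else (G z - G 0)/(z-0)) holomorphic_on ball 0 1"
    by (rule pole_lemma_open) simp
  have "deriv G 0 = f 0" using G[of 0] DERIV_imp_deriv by simp
  moreover have "(\<lambda>z. if z = 0 then deriv G 0 else (G z - G 0)/(z-0)) = (\<lambda>z. if z = 0 then f 0 else (G z - G 0)/z)"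
    using \<open>deriv G 0 = f 0\<close> by (simp add: fun_eq_iff)
  ultimately have "(\<lambda>z. if z = 0 then f 0 else (G z - G 0)/z) holomorphic_on ball 0 1" using h by simp
  hence "Cop f holomorphic_on ball 0 1"
    by (rule holomorphic_transform) (simp add: Cop_formula_pt[OF G] del: mem_ball mem_ball_0)
  then show ?thesis unfolding OD_def by (simp add: Cop_def)
qed

theorem mainTheorem3:
  shows "(\<forall>f\<in>OD. \<forall>g\<in>OD. Cop (\<lambda>z. f z + g z) = (\<lambda>z. Cop f z + Cop g z))
       \<and> (\<forall>f\<in>OD. \<forall>c::complex. Cop (\<lambda>z. c * f z) = (\<lambda>z. c * Cop f z))
       \<and> bij_betw Cop OD OD"
proof (intro conjI ballI allI)
  fix f g assume f: "f \<in> OD" and g: "g \<in> OD"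
  obtain Gf where Gf: "\<And>x. x \<in> ball 0 1 \<Longrightarrow> (Gf has_field_derivative f x / (1 - x)) (at x)"
    using exists_prim[OF f] by blast
  obtain Gg where Gg: "\<And>x. x \<in> ball 0 1 \<Longrightarrow> (Gg has_field_derivative g x / (1 - x)) (at x)"
    using exists_prim[OF g] by blast
  have "((\<lambda>z. Gf z + Gg z) has_field_derivative (f x + g x) / (1 - x)) (at x)" if "x \<in> ball 0 1" for x
    using DERIV_add[OF Gf[OF that] Gg[OF that]] by (simp add: add_divide_distrib)
  from Cop_formula[OF this] Cop_formula[OF Gf] Cop_formula[OF Gg]
  show "Cop (\<lambda>z. f z + g z) = (\<lambda>z. Cop f z + Cop g z)"
    by (auto simp: fun_eq_iff diff_divide_distrib add_divide_distrib)
next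
  fix f and c :: complex assume f: "f \<in> OD"
  obtain Gf where Gf: "\<And>x. x \<in> ball 0 1 \<Longrightarrow> (Gf has_field_derivative f x / (1 - x)) (at x)"
    using exists_prim[OF f] by blast
  have "((\<lambda>z. c * Gf z) has_field_derivative (c * f x) / (1 - x)) (at x)" if "x \<in> ball 0 1" for x
    using DERIV_cmult[OF Gf[OF that], of c] by simp
  from Cop_formula[OF this] Cop_formula[OF Gf]
  show "Cop (\<lambda>z. c * f z) = (\<lambda>z. c * Cop f z)"
    by (auto simp: fun_eq_iff right_diff_distrib)
next
  show "bij_betw Cop OD OD"
    unfolding bij_betw_def
  proof (intro conjI)
    show "inj_on Cop OD"
    proof (rule inj_onI)
      fix f g assume f: "f \<in> OD" and g: "g \<in> OD" and eq: "Cop f = Cop g"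
      obtain Gf where Gf: "\<And>x. x \<in> ball 0 1 \<Longrightarrow> (Gf has_field_derivative f x / (1 - x)) (at x)"
        using exists_prim[OF f] by blast
      obtain Gg where Gg: "\<And>x. x \<in> ball 0 1 \<Longrightarrow> (Gg has_field_derivative g x / (1 - x)) (at x)"
        using exists_prim[OF g] by blast
      have same: "Gf z - Gf 0 = Gg z - Gg 0" if "z \<in> ball 0 1" for z
      proof (cases "z = 0")
        case False
        have "(Gf z - Gf 0)/z = (Gg z - Gg 0)/z" using fun_cong[OF eq, of z] that False
          by (simp add: Cop_formula_pt[OF Gf] Cop_formula_pt[OF Gg] del: mem_ball mem_ball_0)
        then show ?thesis using False by (simp add: divide_cancel_right)
      qed simp
      show "f = g"
      proof
        fix x show "f x = g x"
        proof (cases "x \<in> ball 0 1")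
          case True
          have d1: "((\<lambda>z. Gf z - Gf 0) has_field_derivative f x / (1 - x)) (at x)"
            using DERIV_diff[OF Gf[OF True] DERIV_const[of "Gf 0" "at x"]] by simp
          have d2: "((\<lambda>z. Gf z - Gf 0) has_field_derivative g x / (1 - x)) (at x)"
          proof -
            have "((\<lambda>z. Gg z - Gg 0) has_field_derivative g x / (1 - x)) (at x)"
              using DERIV_diff[OF Gg[OF True] DERIV_const[of "Gg 0" "at x"]] by simp
            then show ?thesis
              by (rule has_field_derivative_transform_within_open[OF _ open_ball True])
                 (simp add: same)
          qed
          have "f x / (1 - x) = g x / (1 - x)" using DERIV_unique[OF d1 d2] .
          moreover have "1 - x \<noteq> 0" using True by (auto simp: dist_norm)
          ultimately show ?thesis by simp
        next
          case False then show ?thesis using f g by (simp add: OD_def)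
        qed
      qed
    qed
    show "Cop ` OD = OD"
    proof
      show "Cop ` OD \<subseteq> OD"
        using Cop_OD exists_prim by blast
      show "OD \<subseteq> Cop ` OD"
      proof
        fix g assume g: "g \<in> OD"
        have hol: "g holomorphic_on ball 0 1" using g by (simp add: OD_def)
        define f where "f z = (if z \<in> ball 0 1 then (1 - z) * (g z + z * deriv g z) else 0)" for z
        have "(\<lambda>z. (1 - z) * (g z + z * deriv g z)) holomorphic_on ball 0 1"
          using hol by (intro holomorphic_intros holomorphic_deriv) auto
        hence "f holomorphic_on ball 0 1"
          by (rule holomorphic_transform) (simp add: f_def)
        hence fOD: "f \<in> OD" unfolding OD_def by (simp add: f_def)
        have G: "((\<lambda>z. z * g z) has_field_derivative f x / (1 - x)) (at x)" if x: "x \<in> ball 0 1" for x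
        proof -
          have dg: "(g has_field_derivative deriv g x) (at x)"
            using hol x by (intro holomorphic_derivI[OF hol open_ball x])
          have "1 - x \<noteq> 0" using x by (auto simp: dist_norm)
          then have "f x / (1 - x) = 1 * g x + x * deriv g x"
            using x by (simp add: f_def)
          then show ?thesis using DERIV_mult[OF DERIV_ident dg] by (simp add: mult.commute)
        qed
        have "Cop f = g"
        proof
          fix z show "Cop f z = g z"
          proof -
            have "Cop f z = (if z \<in> ball 0 1 then (if z = 0 then f 0 else (z * g z - 0 * g 0) / z) else 0)"
              by (rule Cop_formula_pt[OF G])
            also have "\<dots> = g z" using g by (auto simp: OD_def f_def)
            finally show ?thesis .
          qed
        qed
        then show "g \<in> Cop ` OD" using fOD by blast
      qed
    qed
  qed
qed

end
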